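(* Let $X$ be an exponential vector space over a field $K$ such that $Q(X)$ generates $X\smallsetminus X_0$. Then every maximal orderly independent subset of $Q(X)$ (i.e. every orderly independent $B\subseteq Q(X)$ not properly contained in any orderly independent subset of $Q(X)$) is a basis of $X\smallsetminus X_0$.
   Context: An exponential vector space (evs) over a field $K$ is a partially ordered set $(X,\leq)$ with a binary operation $+$ on $X$ and a map $K\times X\to X$, $(\alpha,x)\mapsto \alpha x$, such that: (A1) $(X,+)$ is a commutative semigroup with identity $\theta$; (A2) $x\leq y$ implies $x+z\leq y+z$ and $\alpha x\leq \alpha y$ for all $z\in X$, $\alpha\in K$; (A3) $\alpha(x+y)=\alpha x+\alpha y$, $\alpha(\beta x)=(\alpha\beta)x$, $(\alpha+\beta)x\leq \alpha x+\beta x$, $1x=x$; (A4) $\alpha x=\theta$ iff $\alpha=0$ or $x=\theta$; (A5) $x+(-1)x=\theta$ iff $x\in X_0$, where $X_0:=\{z\in X: y\not\leq z \text{ for all } y\in X\smallsetminus\{z\}\}$ (the set of minimal elements, called the primitive space; it is a vector space over $K$); (A6) for each $x\in X$ there is $p\in X_0$ with $p\leq x$. For $x\in X\smallsetminus X_0$ let $L(x):=\{z\in X: z\geq \alpha x+p \text{ for some } \alpha\in K\smallsetminus\{0\},\ p\in X_0\}$. A subset $B\subseteq X\smallsetminus X_0$ generates $X\smallsetminus X_0$ if $X\smallsetminus X_0=\bigcup_{b\in B}L(b)$. Elements $x,y\in X\smallsetminus X_0$ are orderly dependent if $x\in L(y)$ or $y\in L(x)$, and orderly independent otherwise; $B\subseteq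 X\smallsetminus X_0$ is orderly independent if any two distinct members of $B$ are orderly independent. A basis of $X\smallsetminus X_0$ is an orderly independent subset of $X\smallsetminus X_0$ that generates $X\smallsetminus X_0$. For $x\in X$ write $\downarrow x:=\{z\in X: z\leq x\}$. The feasible set is $Q(X):=\{x\in X\smallsetminus X_0: (\downarrow x\smallsetminus X_0)\subseteq L(x)\}$. *)

theory Defs
  imports Main
begin

text \<open>An exponential vector space over a field (the type 'k, i.e. K = UNIV::'k set),
  given by a carrier X, an order le, addition pl, scalar multiplication sm and identity th.\<close>

definition evs ::
  "'a set \<Rightarrow> ('a \<Rightarrow> 'a \<Rightarrow> bool) \<Rightarrow> ('a \<Rightarrow> 'a \<Rightarrow> 'a) \<Rightarrow> ('k::field \<Rightarrow> 'a \<Rightarrow> 'a) \<Rightarrow> 'a \<Rightarrow> bool"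
  where
  "evs X le pl sm th \<longleftrightarrow>
     \<comment> \<open>partial order on X\<close>
     (\<forall>x\<in>X. le x x) \<and>
     (\<forall>x\<in>X. \<forall>y\<in>X. le x y \<and> le y x \<longrightarrow> x = y) \<and>
     (\<forall>x\<in>X. \<forall>y\<in>X. \<forall>z\<in>X. le x y \<and> le y z \<longrightarrow> le x z) \<and>
     \<comment> \<open>closure\<close>
     (\<forall>x\<in>X. \<forall>y\<in>X. pl x y \<in> X) \<and>
     (\<forall>a. \<forall>x\<in>X. sm a x \<in> X) \<and>
     th \<in> X \<and>
     \<comment> \<open>(A1)\<close>
     (\<forall>x\<in>X. \<forall>y\<in>X. \<forall>z\<in>X. pl (pl x y) z = pl x (pl y z)) \<and>
     (\<forall>x\<in>X. \<forall>y\<in>X. pl x y = pl y x) \<and>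
     (\<forall>x\<in>X. pl x th = x) \<and>
     \<comment> \<open>(A2)\<close>
     (\<forall>x\<in>X. \<forall>y\<in>X. le x y \<longrightarrow> (\<forall>z\<in>X. le (pl x z) (pl y z)) \<and> (\<forall>a. le (sm a x) (sm a y))) \<and>
     \<comment> \<open>(A3)\<close>
     (\<forall>a. \<forall>x\<in>X. \<forall>y\<in>X. sm a (pl x y) = pl (sm a x) (sm a y)) \<and>
     (\<forall>a b. \<forall>x\<in>X. sm a (sm b x) = sm (a * b) x) \<and>
     (\<forall>a b. \<forall>x\<in>X. le (sm (a + b) x) (pl (sm a x) (sm b x))) \<and>
     (\<forall>x\<in>X. sm 1 x = x) \<and>
     \<comment> \<open>(A4)\<close>
     (\<forall>a. \<forall>x\<in>X. sm a x = th \<longleftrightarrow> a = 0 \<or> x = th) \<and>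
     \<comment> \<open>(A5)\<close>
     (\<forall>x\<in>X. pl x (sm (-1) x) = th \<longleftrightarrow>
        x \<in> {z\<in>X. \<forall>y\<in>X - {z}. \<not> le y z}) \<and>
     \<comment> \<open>(A6)\<close>
     (\<forall>x\<in>X. \<exists>p\<in>{z\<in>X. \<forall>y\<in>X - {z}. \<not> le y z}. le p x)"

definition prim :: "'a set \<Rightarrow> ('a \<Rightarrow> 'a \<Rightarrow> bool) \<Rightarrow> 'a set" where
  "prim X le = {z\<in>X. \<forall>y\<in>X - {z}. \<not> le y z}"

definition Lset ::
  "'a set \<Rightarrow> ('a \<Rightarrow> 'a \<Rightarrow> bool) \<Rightarrow> ('a \<Rightarrow> 'a \<Rightarrow> 'a) \<Rightarrow> ('k::field \<Rightarrow> 'a \<Rightarrow> 'a) \<Rightarrow> 'a \<Rightarrow> 'a set"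
  where
  "Lset X le pl sm x = {z\<in>X. \<exists>a p. a \<noteq> 0 \<and> p \<in> prim X le \<and> le (pl (sm a x) p) z}"

definition generates ::
  "'a set \<Rightarrow> ('a \<Rightarrow> 'a \<Rightarrow> bool) \<Rightarrow> ('a \<Rightarrow> 'a \<Rightarrow> 'a) \<Rightarrow> ('k::field \<Rightarrow> 'a \<Rightarrow> 'a) \<Rightarrow> 'a set \<Rightarrow> bool"
  where
  "generates X le pl sm B \<longleftrightarrow> B \<subseteq> X - prim X le \<and>
     X - prim X le = (\<Union>b\<in>B. Lset X le pl sm b)"

definition orderly_indep ::
  "'a set \<Rightarrow> ('a \<Rightarrow> 'a \<Rightarrow> bool) \<Rightarrow> ('a \<Rightarrow> 'a \<Rightarrow> 'a) \<Rightarrow> ('k::field \<Rightarrow> 'a \<Rightarrow> 'a) \<Rightarrow> 'a set \<Rightarrow> bool"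
  where
  "orderly_indep X le pl sm B \<longleftrightarrow> B \<subseteq> X - prim X le \<and>
     (\<forall>x\<in>B. \<forall>y\<in>B. x \<noteq> y \<longrightarrow> x \<notin> Lset X le pl sm y \<and> y \<notin> Lset X le pl sm x)"

definition is_basis ::
  "'a set \<Rightarrow> ('a \<Rightarrow> 'a \<Rightarrow> bool) \<Rightarrow> ('a \<Rightarrow> 'a \<Rightarrow> 'a) \<Rightarrow> ('k::field \<Rightarrow> 'a \<Rightarrow> 'a) \<Rightarrow> 'a set \<Rightarrow> bool"
  where
  "is_basis X le pl sm B \<longleftrightarrow> orderly_indep X le pl sm B \<and> generates X le pl sm B"

definition feasible ::
  "'a set \<Rightarrow> ('a \<Rightarrow> 'a \<Rightarrow> bool) \<Rightarrow> ('a \<Rightarrow> 'a \<Rightarrow> 'a) \<Rightarrow> ('k::field \<Rightarrow> 'a \<Rightarrow> 'a) \<Rightarrow> 'a set"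
  where
  "feasible X le pl sm = {x\<in>X - prim X le.
     {z\<in>X. le z x} - prim X le \<subseteq> Lset X le pl sm x}"

end

theory Submission
  imports Defs
begin

context
  fixes X :: "'a set" and le :: "'a \<Rightarrow> 'a \<Rightarrow> bool" and pl :: "'a \<Rightarrow> 'a \<Rightarrow> 'a"
    and sm :: "'k::field \<Rightarrow> 'a \<Rightarrow> 'a" and th :: 'a
  assumes E: "evs X le pl sm th"
begin

lemma refl: "x \<in> X \<Longrightarrow> le x x" using E[unfolded evs_def, THEN conjunct1] by blast
lemma trans: "x \<in> X \<Longrightarrow> y \<in> X \<Longrightarrow> z \<in> X \<Longrightarrow> le x y \<Longrightarrow> le y z \<Longrightarrow> le x z"
  using E[unfolded evs_def, THEN conjunct2, THEN conjunct2, THEN conjunct1] by blast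
lemma plX: "x \<in> X \<Longrightarrow> y \<in> X \<Longrightarrow> pl x y \<in> X" using E[unfolded evs_def, THEN conjunct2, THEN conjunct2, THEN conjunct2, THEN conjunct1] by blast
lemma smX: "x \<in> X \<Longrightarrow> sm a x \<in> X" using E[unfolded evs_def, THEN conjunct2, THEN conjunct2, THEN conjunct2, THEN conjunct2, THEN conjunct1] by blast
lemma thX: "th \<in> X" using E[unfolded evs_def, THEN conjunct2, THEN conjunct2, THEN conjunct2, THEN conjunct2, THEN conjunct2, THEN conjunct1] by blast
lemma assoc: "x \<in> X \<Longrightarrow> y \<in> X \<Longrightarrow> z \<in> X \<Longrightarrow> pl (pl x y) z = pl x (pl y z)"
  using E[unfolded evs_def, THEN conjunct2, THEN conjunct2, THEN conjunct2, THEN conjunct2, THEN conjunct2, THEN conjunct2, THEN conjunct1] by blast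
lemma comm: "x \<in> X \<Longrightarrow> y \<in> X \<Longrightarrow> pl x y = pl y x" using E[unfolded evs_def, THEN conjunct2, THEN conjunct2, THEN conjunct2, THEN conjunct2, THEN conjunct2, THEN conjunct2, THEN conjunct2, THEN conjunct1] by blast
lemma unit: "x \<in> X \<Longrightarrow> pl x th = x" using E[unfolded evs_def, THEN conjunct2, THEN conjunct2, THEN conjunct2, THEN conjunct2, THEN conjunct2, THEN conjunct2, THEN conjunct2, THEN conjunct2, THEN conjunct1] by blast
lemma monopl: "x \<in> X \<Longrightarrow> y \<in> X \<Longrightarrow> z \<in> X \<Longrightarrow> le x y \<Longrightarrow> le (pl x z) (pl y z)"
  using E[unfolded evs_def, THEN conjunct2, THEN conjunct2, THEN conjunct2, THEN conjunct2, THEN conjunct2, THEN conjunct2, THEN conjunct2, THEN conjunct2, THEN conjunct2, THEN conjunct1] by blast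
lemma monosm: "x \<in> X \<Longrightarrow> y \<in> X \<Longrightarrow> le x y \<Longrightarrow> le (sm a x) (sm a y)"
  using E[unfolded evs_def, THEN conjunct2, THEN conjunct2, THEN conjunct2, THEN conjunct2, THEN conjunct2, THEN conjunct2, THEN conjunct2, THEN conjunct2, THEN conjunct2, THEN conjunct1] by blast
lemma distr: "x \<in> X \<Longrightarrow> y \<in> X \<Longrightarrow> sm a (pl x y) = pl (sm a x) (sm a y)"
  using E[unfolded evs_def, THEN conjunct2, THEN conjunct2, THEN conjunct2, THEN conjunct2, THEN conjunct2, THEN conjunct2, THEN conjunct2, THEN conjunct2, THEN conjunct2, THEN conjunct2, THEN conjunct1] by blast
lemma smsm: "x \<in> X \<Longrightarrow> sm a (sm b x) = sm (a * b) x" using E[unfolded evs_def, THEN conjunct2, THEN conjunct2, THEN conjunct2, THEN conjunct2, THEN conjunct2, THEN conjunct2, THEN conjunct2, THEN conjunct2, THEN conjunct2, THEN conjunct2, THEN conjunct2, THEN conjunct1] by blast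
lemma sm1: "x \<in> X \<Longrightarrow> sm 1 x = x" using E[unfolded evs_def, THEN conjunct2, THEN conjunct2, THEN conjunct2, THEN conjunct2, THEN conjunct2, THEN conjunct2, THEN conjunct2, THEN conjunct2, THEN conjunct2, THEN conjunct2, THEN conjunct2, THEN conjunct2, THEN conjunct2, THEN conjunct1] by blast
lemma smth: "x \<in> X \<Longrightarrow> sm a x = th \<longleftrightarrow> a = 0 \<or> x = th" using E[unfolded evs_def, THEN conjunct2, THEN conjunct2, THEN conjunct2, THEN conjunct2, THEN conjunct2, THEN conjunct2, THEN conjunct2, THEN conjunct2, THEN conjunct2, THEN conjunct2, THEN conjunct2, THEN conjunct2, THEN conjunct2, THEN conjunct2, THEN conjunct1] by blast
lemma A5: "x \<in> X \<Longrightarrow> pl x (sm (-1) x) = th \<longleftrightarrow> x \<in> prim X le"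
  using E[unfolded evs_def, THEN conjunct2, THEN conjunct2, THEN conjunct2, THEN conjunct2, THEN conjunct2, THEN conjunct2, THEN conjunct2, THEN conjunct2, THEN conjunct2, THEN conjunct2, THEN conjunct2, THEN conjunct2, THEN conjunct2, THEN conjunct2, THEN conjunct2, THEN conjunct1] unfolding prim_def by blast
lemma primX: "p \<in> prim X le \<Longrightarrow> p \<in> X" unfolding prim_def by blast


lemma prim_sm: assumes "p \<in> prim X le" shows "sm a p \<in> prim X le"
proof -
  have p: "p \<in> X" using assms primX by blast
  have "pl p (sm (-1) p) = th" using A5 p assms by blast
  hence "sm a (pl p (sm (-1) p)) = th" using smth thX by blast
  hence "pl (sm a p) (sm (-a) p) = th" using distr[OF p smX[OF p]] smsm[OF p] by simp
  moreover have "sm (-1) (sm a p) = sm (-a) p" using smsm[OF p] by simp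
  ultimately show ?thesis using A5[OF smX[OF p, of a]] by simp
qed

lemma prim_pl: assumes "p \<in> prim X le" "q \<in> prim X le" shows "pl p q \<in> prim X le"
proof -
  have p: "p \<in> X" and q: "q \<in> X" using assms primX by blast+
  have 1: "pl p (sm (-1) p) = th" "pl q (sm (-1) q) = th" using A5 p q assms by blast+
  have mp: "sm (-1) p \<in> X" and mq: "sm (-1) q \<in> X" using smX p q by blast+
  have "pl (pl p q) (sm (-1) (pl p q)) = pl (pl p q) (pl (sm (-1) p) (sm (-1) q))"
    using distr p q by simp
  also have "\<dots> = pl p (pl q (pl (sm (-1) p) (sm (-1) q)))" using assoc p q mp mq plX by simp
  also have "\<dots> = pl p (pl (sm (-1) p) (pl q (sm (-1) q)))"
    using assoc comm p q mp mq plX by metis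
  also have "\<dots> = th" using 1 assoc p mp q mq unit by (metis plX)
  finally show ?thesis using A5 plX p q by simp
qed

lemma back_eq: assumes "a \<noteq> 0" "p \<in> prim X le" "q \<in> X"
  shows "pl (sm (inverse a) (pl (sm a q) p)) (sm (- inverse a) p) = q"
proof -
  have p: "p \<in> X" using assms primX by auto
  define y where "y = pl (sm a q) p"
  have ip: "sm (inverse a) p \<in> X" "sm (- inverse a) p \<in> X" using smX p by auto
  have "sm (inverse a) y = pl q (sm (inverse a) p)"
    unfolding y_def using distr smsm sm1 p assms(3) smX assms(1) by simp
  hence "pl (sm (inverse a) y) (sm (- inverse a) p) = pl q (pl (sm (inverse a) p) (sm (-1) (sm (inverse a) p)))"
    using assoc assms(3) ip smsm p by simp
  also have "pl (sm (inverse a) p) (sm (-1) (sm (inverse a) p)) = th"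
    using A5[OF ip(1)] prim_sm[OF assms(2)] by simp
  finally show ?thesis using unit assms(3) unfolding y_def by simp
qed

lemma prim_back: assumes "a \<noteq> 0" "p \<in> prim X le" "q \<in> X" "pl (sm a q) p \<in> prim X le"
  shows "q \<in> prim X le"
proof -
  have "pl (sm (inverse a) (pl (sm a q) p)) (sm (- inverse a) p) \<in> prim X le"
    using prim_sm prim_pl assms by blast
  thus ?thesis using back_eq assms by simp
qed

lemma L_nonprim: assumes "x \<in> Lset X le pl sm b" "b \<in> X - prim X le" shows "x \<in> X - prim X le"
proof
  show "x \<in> X" using assms unfolding Lset_def by blast
  show "x \<notin> prim X le"
  proof
    assume xp: "x \<in> prim X le"
    obtain a p where ap: "a \<noteq> 0" "p \<in> prim X le" "le (pl (sm a b) p) x"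
      using assms(1) unfolding Lset_def by blast
    have "pl (sm a b) p \<in> X" using plX smX primX ap assms by blast
    hence "pl (sm a b) p = x" using xp ap unfolding prim_def by blast
    hence "b \<in> prim X le" using prim_back ap xp assms by auto
    thus False using assms by blast
  qed
qed

lemma Ltrans: assumes "x \<in> Lset X le pl sm q" "q \<in> Lset X le pl sm b" "b \<in> X"
  shows "x \<in> Lset X le pl sm b"
proof -
  obtain a p where ap: "a \<noteq> 0" "p \<in> prim X le" "le (pl (sm a q) p) x" "x \<in> X"
    using assms(1) unfolding Lset_def by blast
  obtain c p' where cp: "c \<noteq> 0" "p' \<in> prim X le" "le (pl (sm c b) p') q" "q \<in> X"
    using assms(2) unfolding Lset_def by blast
  have p: "p \<in> X" "p' \<in> X" using ap cp primX by auto
  have cb: "pl (sm c b) p' \<in> X" using plX smX p assms(3) by blast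
  have acb: "sm a (pl (sm c b) p') \<in> X" using smX cb by blast
  have aq: "sm a q \<in> X" using smX cp by blast
  have "le (sm a (pl (sm c b) p')) (sm a q)"
    using monosm[OF cb cp(4) cp(3)] .
  hence 1: "le (pl (sm a (pl (sm c b) p')) p) (pl (sm a q) p)"
    using monopl[OF acb aq p(1)] by blast
  have "sm a (pl (sm c b) p') = pl (sm (a*c) b) (sm a p')"
    using distr smsm p assms(3) smX by simp
  moreover have "pl (pl (sm (a*c) b) (sm a p')) p = pl (sm (a*c) b) (pl (sm a p') p)"
    using assoc p assms(3) smX by simp
  ultimately have 2: "pl (sm a (pl (sm c b) p')) p = pl (sm (a*c) b) (pl (sm a p') p)" by simp
  have "le (pl (sm a (pl (sm c b) p')) p) x"
    using trans[OF plX[OF acb p(1)] plX[OF aq p(1)] ap(4) 1 ap(3)] .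
  hence "le (pl (sm (a*c) b) (pl (sm a p') p)) x" using 2 by simp
  moreover have "pl (sm a p') p \<in> prim X le" using prim_sm prim_pl ap cp by blast
  moreover have "a * c \<noteq> 0" using ap cp by simp
  ultimately show ?thesis unfolding Lset_def using ap by blast
qed

lemma Lsym: assumes "b \<in> feasible X le pl sm" "q \<in> X - prim X le" "b \<in> Lset X le pl sm q"
  shows "q \<in> Lset X le pl sm b"
proof -
  obtain a p where ap: "a \<noteq> 0" "p \<in> prim X le" "le (pl (sm a q) p) b" "b \<in> X"
    using assms(3) unfolding Lset_def by blast
  have p: "p \<in> X" using ap primX by auto
  have q: "q \<in> X" using assms by blast
  define y where "y = pl (sm a q) p"
  have y: "y \<in> X" unfolding y_def using plX smX p q by blast
  have ip: "sm (inverse a) p \<in> X" "sm (- inverse a) p \<in> X" using smX p by auto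
  have qy: "pl (sm (inverse a) y) (sm (- inverse a) p) = q" using back_eq ap q unfolding y_def by simp
  have ynp: "y \<notin> prim X le"
  proof
    assume "y \<in> prim X le"
    hence "q \<in> prim X le" using prim_back ap q unfolding y_def by blast
    thus False using assms(2) by blast
  qed
  have "y \<in> Lset X le pl sm b" using assms(1) ap y ynp unfolding feasible_def y_def by blast
  then obtain c p' where cp: "c \<noteq> 0" "p' \<in> prim X le" "le (pl (sm c b) p') y"
    unfolding Lset_def by blast
  have p': "p' \<in> X" using cp primX by auto
  have cb: "pl (sm c b) p' \<in> X" using plX smX p' ap(4) by blast
  have "le (sm (inverse a) (pl (sm c b) p')) (sm (inverse a) y)"
    using monosm[OF cb y cp(3)] .
  hence "le (pl (sm (inverse a) (pl (sm c b) p')) (sm (- inverse a) p)) (pl (sm (inverse a) y) (sm (- inverse a) p))"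
    using monopl[OF smX[OF cb] smX[OF y] ip(2)] by blast
  hence "le (pl (sm (inverse a) (pl (sm c b) p')) (sm (- inverse a) p)) q"
    using qy by simp
  moreover have "sm (inverse a) (pl (sm c b) p') = pl (sm (inverse a * c) b) (sm (inverse a) p')"
    using distr smsm p' ap smX by simp
  moreover have "pl (pl (sm (inverse a * c) b) (sm (inverse a) p')) (sm (- inverse a) p)
     = pl (sm (inverse a * c) b) (pl (sm (inverse a) p') (sm (- inverse a) p))"
    using assoc p' ip ap smX by simp
  ultimately have "le (pl (sm (inverse a * c) b) (pl (sm (inverse a) p') (sm (- inverse a) p))) q"
    by simp
  moreover have "pl (sm (inverse a) p') (sm (- inverse a) p) \<in> prim X le"
    using prim_sm prim_pl ap cp by blast
  moreover have "inverse a * c \<noteq> 0" using ap cp by simp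
  ultimately show ?thesis unfolding Lset_def using q by blast
qed

end

theorem mainTheorem7:
  fixes X :: "'a set" and le :: "'a \<Rightarrow> 'a \<Rightarrow> bool" and pl :: "'a \<Rightarrow> 'a \<Rightarrow> 'a"
    and sm :: "'k::field \<Rightarrow> 'a \<Rightarrow> 'a" and th :: 'a and B :: "'a set"
  assumes "evs X le pl sm th"
    and "generates X le pl sm (feasible X le pl sm)"
    and "B \<subseteq> feasible X le pl sm"
    and "orderly_indep X le pl sm B"
    and "\<forall>C. B \<subseteq> C \<and> C \<subseteq> feasible X le pl sm \<and> orderly_indep X le pl sm C \<longrightarrow> C = B"
  shows "is_basis X le pl sm B"
proof -
  have BX: "B \<subseteq> X - prim X le" using assms(4) unfolding orderly_indep_def by blast
  have FX: "feasible X le pl sm \<subseteq> X - prim X le" unfolding feasible_def by blast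
  have "X - prim X le \<subseteq> (\<Union>b\<in>B. Lset X le pl sm b)"
  proof
    fix x assume x: "x \<in> X - prim X le"
    then obtain q where q: "q \<in> feasible X le pl sm" "x \<in> Lset X le pl sm q"
      using assms(2) unfolding generates_def by blast
    show "x \<in> (\<Union>b\<in>B. Lset X le pl sm b)"
    proof (cases "q \<in> B")
      case True thus ?thesis using q by blast
    next
      case False
      have "\<not> orderly_indep X le pl sm (insert q B)"
        using assms(5) assms(3) q False by blast
      then obtain b where b: "b \<in> B" "q \<in> Lset X le pl sm b \<or> b \<in> Lset X le pl sm q"
        using assms(4) q FX False unfolding orderly_indep_def by blast
      have qL: "q \<in> Lset X le pl sm b"
        using b Lsym[OF assms(1)] assms(3) q FX by blast
      have "x \<in> Lset X le pl sm b" using Ltrans[OF assms(1) q(2) qL] b BX by blast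
      thus ?thesis using b by blast
    qed
  qed
  moreover have "(\<Union>b\<in>B. Lset X le pl sm b) \<subseteq> X - prim X le"
  proof
    fix x assume "x \<in> (\<Union>b\<in>B. Lset X le pl sm b)"
    then obtain b where b: "b \<in> B" "x \<in> Lset X le pl sm b" by blast
    show "x \<in> X - prim X le" using L_nonprim[OF assms(1)] b BX by blast
  qed
  ultimately show ?thesis using assms(4) BX unfolding is_basis_def generates_def by blast
qed

end
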